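(* Let $1\le p<2$, let $\{X_n,n\ge1\}$ be a sequence of identically distributed random variables satisfying the variance condition (V), and let $L$ be a slowly varying function on $[0,\infty)$ satisfying the standing assumptions (S), with $L(x)\ge1$ and $L$ increasing on $[0,\infty)$ when $p=1$. If for some constant $c\in\mathbb{R}$, $$\sum_{n=1}^{\infty} n^{-1}\,\mathbb{P}\left(\max_{1\le j\le n}\left|\sum_{i=1}^{j}(X_i-c)\right|>\varepsilon n^{1/p}\tilde{L}(n^{1/p})\right)<\infty\quad\text{for all }\varepsilon>0,$$ then $\mathbb{E}\left(|X_1|^pL^p(|X_1|)\right)<\infty$ and $\mathbb{E}(X_1)=c$.
   Context: A function $R$ is slowly varying if it is positive and measurable on $[A,\infty)$ for some $A>0$ and $\lim_{x\to\infty}R(\lambda x)/R(x)=1$ for each $\lambda>0$. The de Bruijn conjugate $\tilde L$ of a slowly varying $L$ is a slowly varying function with $\lim_{x\to\infty}L(x)\tilde L(xL(x))=1$ and $\lim_{x\to\infty}\tilde L(x)L(x\tilde L(x))=1$. Standing assumptions (S): $L$ and $\tilde L$ are continuous on $[0,\infty)$ and differentiable on $[A,\infty)$ for some $A>0$, and $\lim_{x\to\infty}xL'(x)/L(x)=0$. Variance condition (V): there is a constant $C$ such that for all integers $k\ge0$, $\ell\ge1$ and all nondecreasing functions $f_i:\mathbb{R}\to\mathbb{R}$, $\operatorname{Var}\left(\sum_{i=k+1}^{k+\ell}f_i(X_i)\right)\le C\sum_{i=k+1}^{k+\ell}\operatorname{Var}(f_i(X_i))$, provided the variances exist. *)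

theory Defs
  imports "HOL-Probability.Probability"
begin

definition slowly_varying :: "(real \<Rightarrow> real) \<Rightarrow> bool" where
  "slowly_varying R \<longleftrightarrow>
     (\<exists>A>0. (\<forall>x\<ge>A. R x > 0) \<and> R \<in> borel_measurable (restrict_space borel {A..})) \<and>
     (\<forall>lam>0. ((\<lambda>x. R (lam * x) / R x) \<longlongrightarrow> 1) at_top)"

definition de_bruijn_conjugate :: "(real \<Rightarrow> real) \<Rightarrow> (real \<Rightarrow> real) \<Rightarrow> bool" where
  "de_bruijn_conjugate L Lt \<longleftrightarrow>
     slowly_varying Lt \<and>
     ((\<lambda>x. L x * Lt (x * L x)) \<longlongrightarrow> 1) at_top \<and>
     ((\<lambda>x. Lt x * L (x * Lt x)) \<longlongrightarrow> 1) at_top"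

definition standing_assumptions :: "(real \<Rightarrow> real) \<Rightarrow> (real \<Rightarrow> real) \<Rightarrow> bool" where
  "standing_assumptions L Lt \<longleftrightarrow>
     continuous_on {0..} L \<and> continuous_on {0..} Lt \<and>
     (\<exists>A>0. \<forall>x\<ge>A. L differentiable (at x) \<and> Lt differentiable (at x)) \<and>
     ((\<lambda>x. x * deriv L x / L x) \<longlongrightarrow> 0) at_top"

text \<open>Variance condition (V) for the sequence X 1, X 2, ... (X 0 is ignored).\<close>
definition variance_condition :: "'a measure \<Rightarrow> (nat \<Rightarrow> 'a \<Rightarrow> real) \<Rightarrow> bool" where
  "variance_condition M X \<longleftrightarrow>
     (\<exists>C::real. \<forall>(k::nat) (l::nat) (f::nat \<Rightarrow> real \<Rightarrow> real).
        l \<ge> 1 \<longrightarrow> (\<forall>i. mono (f i)) \<longrightarrow>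
        (\<forall>i\<in>{k+1..k+l}. integrable M (\<lambda>\<omega>. (f i (X i \<omega>))\<^sup>2)) \<longrightarrow>
        prob_space.variance M (\<lambda>\<omega>. \<Sum>i\<in>{k+1..k+l}. f i (X i \<omega>))
          \<le> C * (\<Sum>i\<in>{k+1..k+l}. prob_space.variance M (\<lambda>\<omega>. f i (X i \<omega>))))"

end

theory Submission
  imports Defs
begin


lemma mono_powr_L:
  fixes L Lt :: "real \<Rightarrow> real"
  assumes sv: "slowly_varying L" and sa: "standing_assumptions L Lt" and d: "\<delta> > 0"
  shows "\<exists>A>0. (\<forall>y\<ge>A. L y > 0) \<and>
           (\<forall>y y'. A \<le> y \<longrightarrow> y \<le> y' \<longrightarrow> y powr \<delta> * L y \<le> y' powr \<delta> * L y')"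
proof -
  obtain A1 where A1: "A1 > 0" "\<And>x. x \<ge> A1 \<Longrightarrow> L x > 0"
    using sv unfolding slowly_varying_def by blast
  obtain A2 where A2: "A2 > 0" "\<And>x. x \<ge> A2 \<Longrightarrow> L differentiable (at x)"
    using sa unfolding standing_assumptions_def by blast
  have lim: "((\<lambda>x. x * deriv L x / L x) \<longlongrightarrow> 0) at_top"
    using sa unfolding standing_assumptions_def by blast
  have "eventually (\<lambda>x. x * deriv L x / L x > - \<delta>) at_top"
    using order_tendstoD(1)[OF lim, of "-\<delta>"] d by simp
  then obtain A3 where A3: "\<And>x. x \<ge> A3 \<Longrightarrow> x * deriv L x / L x > - \<delta>"
    unfolding eventually_at_top_linorder by blast
  define A where "A = max A1 (max A2 (max A3 1))"
  have Apos: "A > 0" unfolding A_def by simp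
  have der: "((\<lambda>t. t powr \<delta> * L t) has_real_derivative
      (\<delta> * t powr (\<delta> - 1) * L t + t powr \<delta> * deriv L t)) (at t)" if "t \<ge> A" for t
  proof -
    have "t > 0" using that Apos by simp
    have h1: "(L has_real_derivative deriv L t) (at t)"
      using A2(2)[of t] that unfolding A_def
      by (simp add: DERIV_deriv_iff_real_differentiable)
    have h2: "((\<lambda>t. t powr \<delta>) has_real_derivative \<delta> * t powr (\<delta> - 1)) (at t)"
      using has_real_derivative_powr[OF \<open>t>0\<close>] by simp
    show ?thesis
      using DERIV_mult[OF h2 h1] by (simp add: mult.commute)
  qed
  have nonneg: "\<delta> * t powr (\<delta> - 1) * L t + t powr \<delta> * deriv L t \<ge> 0" if "t \<ge> A" for t
  proof -
    have t0: "t > 0" using that Apos by simp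
    have Lt: "L t > 0" using A1 that unfolding A_def by simp
    have "t * deriv L t / L t > - \<delta>" using A3 that unfolding A_def by simp
    hence h: "t * deriv L t > - \<delta> * L t" using Lt by (simp add: field_simps)
    have "t powr \<delta> = t * t powr (\<delta> - 1)" using t0 by (simp add: powr_diff)
    hence "\<delta> * t powr (\<delta> - 1) * L t + t powr \<delta> * deriv L t
          = t powr (\<delta> - 1) * (\<delta> * L t + t * deriv L t)" by (simp add: algebra_simps)
    also have "\<dots> \<ge> 0" using h by (intro mult_nonneg_nonneg) auto
    finally show ?thesis .
  qed
  show ?thesis
  proof (intro exI[of _ A] conjI allI impI Apos)
    show "L y > 0" if "y \<ge> A" for y using A1 that unfolding A_def by simp
    show "y powr \<delta> * L y \<le> y' powr \<delta> * L y'" if "A \<le> y" "y \<le> y'" for y y'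
      by (rule deriv_nonneg_imp_mono[OF der nonneg]) (use that in auto)
  qed
qed

lemma h_lower:
  fixes L Lt :: "real \<Rightarrow> real" and p :: real
  assumes sv: "slowly_varying L" and sa: "standing_assumptions L Lt" and p1: "1 \<le> p"
    and pL: "p = 1 \<Longrightarrow> (\<forall>x\<ge>0. L x \<ge> 1) \<and> mono_on {0..} L"
  shows "\<exists>c0>0. \<exists>A>0. \<forall>y\<ge>A. L y > 0 \<and> c0 * y powr (1/p) \<le> y * L y"
proof (cases "p = 1")
  case True
  obtain A where A: "A > 0" "\<And>y. y \<ge> A \<Longrightarrow> L y > 0"
    using mono_powr_L[OF sv sa, of 1] by auto
  have "\<forall>y\<ge>A. L y > 0 \<and> 1 * y powr (1/p) \<le> y * L y"
  proof (intro allI impI conjI)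
    fix y assume y: "y \<ge> A"
    show "L y > 0" using A y by simp
    have "L y \<ge> 1" using pL[OF True] y A by auto
    hence "y * 1 \<le> y * L y" using y A by (intro mult_left_mono) auto
    thus "1 * y powr (1 / p) \<le> y * L y" using True y A by simp
  qed
  thus ?thesis using A(1) by (intro exI[of _ 1]) auto
next
  case False
  hence p1': "p > 1" using p1 by simp
  define d where "d = 1 - 1/p"
  have d0: "d > 0" unfolding d_def using p1' by (simp add: field_simps)
  obtain A where A: "A > 0" "\<And>y. y \<ge> A \<Longrightarrow> L y > 0"
    "\<And>y y'. A \<le> y \<Longrightarrow> y \<le> y' \<Longrightarrow> y powr d * L y \<le> y' powr d * L y'"
    using mono_powr_L[OF sv sa d0] by auto
  define c0 where "c0 = A powr d * L A"
  have c0: "c0 > 0" unfolding c0_def using A by simp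
  have "\<forall>y\<ge>A. L y > 0 \<and> c0 * y powr (1/p) \<le> y * L y"
  proof (intro allI impI conjI)
    fix y assume y: "y \<ge> A"
    show "L y > 0" using A y by simp
    have "y powr (1/p) * y powr d = y powr (1/p + d)" by (simp add: powr_add)
    also have "1/p + d = 1" unfolding d_def by simp
    finally have "y = y powr (1/p) * y powr d" using y A by simp
    hence "y * L y = y powr (1/p) * (y powr d * L y)" by (metis mult.assoc)
    moreover have "c0 \<le> y powr d * L y" unfolding c0_def using A(3)[of A y] y by simp
    moreover have "y powr (1/p) \<ge> 0" by simp
    ultimately show "c0 * y powr (1 / p) \<le> y * L y"
      by (metis mult.commute mult_left_mono)
  qed
  thus ?thesis using A(1) c0 by blast
qed

lemma filterlim_npowr:
  fixes p :: real assumes "p > 0"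
  shows "filterlim (\<lambda>n::nat. real n powr (1/p)) at_top sequentially"
proof (subst filterlim_at_top, intro allI)
  fix Z :: real
  define N where "N = nat \<lceil>(max Z 1) powr p\<rceil>"
  show "eventually (\<lambda>n. Z \<le> real n powr (1/p)) sequentially"
    unfolding eventually_sequentially
  proof (intro exI[of _ N] allI impI)
    fix n assume n: "N \<le> n"
    have "(max Z 1) powr p \<le> real n" using n unfolding N_def by linarith
    hence "((max Z 1) powr p) powr (1/p) \<le> real n powr (1/p)"
      using assms by (intro powr_mono2) auto
    moreover have "((max Z 1) powr p) powr (1/p) = max Z 1"
      using assms by (simp add: powr_powr)
    ultimately show "Z \<le> real n powr (1/p)" by linarith
  qed
qed

lemma b_ratio:
  fixes L Lt :: "real \<Rightarrow> real" and p :: real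
  assumes db: "de_bruijn_conjugate L Lt" and p0: "p > 0"
  defines "b \<equiv> \<lambda>n::nat. real n powr (1/p) * Lt (real n powr (1/p))"
  shows "(\<lambda>n. b n * \<bar>L (b n)\<bar> / real n powr (1/p)) \<longlonglongrightarrow> 1"
    and "eventually (\<lambda>n. b n > 0) sequentially"
proof -
  obtain At where At: "At > 0" "\<And>x. x \<ge> At \<Longrightarrow> Lt x > 0"
    using db unfolding de_bruijn_conjugate_def slowly_varying_def by blast
  have lim: "((\<lambda>x. Lt x * L (x * Lt x)) \<longlongrightarrow> 1) at_top"
    using db unfolding de_bruijn_conjugate_def by blast
  define F where "F = (\<lambda>u. (u * Lt u) * \<bar>L (u * Lt u)\<bar> / u)"
  have "((\<lambda>x. \<bar>Lt x * L (x * Lt x)\<bar>) \<longlongrightarrow> \<bar>1\<bar>) at_top"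
    by (rule tendsto_rabs[OF lim])
  moreover have "eventually (\<lambda>u. \<bar>Lt u * L (u * Lt u)\<bar> = F u) at_top"
    unfolding eventually_at_top_linorder F_def
  proof (intro exI[of _ At] allI impI)
    fix u assume u: "u \<ge> At"
    hence "u > 0" "Lt u > 0" using At by auto
    thus "\<bar>Lt u * L (u * Lt u)\<bar> = u * Lt u * \<bar>L (u * Lt u)\<bar> / u"
      by (simp add: abs_mult)
  qed
  ultimately have FL': "(F \<longlongrightarrow> \<bar>1\<bar>) at_top"
    by (rule Lim_transform_eventually)
  hence FL: "(F \<longlongrightarrow> 1) at_top" by simp
  have "((\<lambda>n. F (real n powr (1/p))) \<longlongrightarrow> 1) sequentially"
    by (rule filterlim_compose[OF FL filterlim_npowr[OF p0]])
  thus "(\<lambda>n. b n * \<bar>L (b n)\<bar> / real n powr (1/p)) \<longlonglongrightarrow> 1"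
    unfolding F_def b_def by (simp add: mult.assoc)
  have "eventually (\<lambda>n. real n powr (1/p) \<ge> At) sequentially"
    using filterlim_npowr[OF p0] unfolding filterlim_at_top by blast
  thus "eventually (\<lambda>n. b n > 0) sequentially"
  proof eventually_elim
    case (elim n)
    have "real n powr (1/p) > 0" using elim At by linarith
    thus ?case unfolding b_def using At elim by (intro mult_pos_pos) auto
  qed
qed



lemma L_bdd:
  fixes L :: "real \<Rightarrow> real"
  assumes "continuous_on {0..} L"
  shows "\<exists>B>0. \<forall>y\<in>{0..R}. \<bar>L y\<bar> \<le> B"
proof -
  have "continuous_on {0..R} L" using assms by (rule continuous_on_subset) auto
  hence "compact (L ` {0..R})" by (intro compact_continuous_image) auto
  hence "bounded (L ` {0..R})" by (rule compact_imp_bounded)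
  then obtain B where "B > 0" "\<And>x. x \<in> L ` {0..R} \<Longrightarrow> norm x \<le> B"
    unfolding bounded_pos by blast
  thus ?thesis by auto
qed

lemma b_inf:
  fixes L :: "real \<Rightarrow> real" and b :: "nat \<Rightarrow> real"
  assumes cont: "continuous_on {0..} L" and p0: "p > 0"
    and R: "(\<lambda>n. b n * \<bar>L (b n)\<bar> / real n powr (1/p)) \<longlonglongrightarrow> 1"
    and pos: "eventually (\<lambda>n. b n > 0) sequentially"
  shows "filterlim b at_top sequentially"
proof (subst filterlim_at_top, intro allI)
  fix Z :: real
  define R0 where "R0 = max Z 0"
  obtain B where B: "B > 0" "\<And>y. y \<in> {0..R0} \<Longrightarrow> \<bar>L y\<bar> \<le> B"
    using L_bdd[OF cont, of R0] by blast
  have e1: "eventually (\<lambda>n. b n * \<bar>L (b n)\<bar> / real n powr (1/p) > 1/2) sequentially"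
    by (rule order_tendstoD(1)[OF R]) simp
  have e2: "eventually (\<lambda>n. real n powr (1/p) \<ge> 2 * R0 * B + 1) sequentially"
    using filterlim_npowr[OF p0] unfolding filterlim_at_top by blast
  show "eventually (\<lambda>n. Z \<le> b n) sequentially"
    using e1 e2 pos
  proof eventually_elim
    case (elim n)
    show ?case
    proof (rule ccontr)
      assume "\<not> Z \<le> b n"
      hence bn: "b n \<in> {0..R0}" using elim unfolding R0_def by auto
      have "b n * \<bar>L (b n)\<bar> \<le> R0 * B"
        using B(2)[OF bn] bn by (intro mult_mono) auto
      moreover have "real n powr (1/p) > 0" using elim B unfolding R0_def
        by (smt (verit) mult_nonneg_nonneg)
      hence "b n * \<bar>L (b n)\<bar> > real n powr (1/p) / 2"
        using elim(1) by (simp add: field_simps)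
      ultimately show False using elim(2) B unfolding R0_def by auto
    qed
  qed
qed

lemma b_comp:
  fixes L Lt :: "real \<Rightarrow> real" and b :: "nat \<Rightarrow> real"
  assumes sv: "slowly_varying L" and sa: "standing_assumptions L Lt" and p0: "p > 0"
    and R: "(\<lambda>n. b n * \<bar>L (b n)\<bar> / real n powr (1/p)) \<longlonglongrightarrow> 1"
    and binf: "filterlim b at_top sequentially"
  shows "\<exists>K>0. \<exists>N\<ge>1. \<forall>m n. N \<le> m \<longrightarrow> m \<le> n \<longrightarrow> b m \<le> K * b n"
proof -
  obtain A where A: "A > 0" "\<And>y. y \<ge> A \<Longrightarrow> L y > 0"
    "\<And>y y'. A \<le> y \<Longrightarrow> y \<le> y' \<Longrightarrow> y powr 1 * L y \<le> y' powr 1 * L y'"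
    using mono_powr_L[OF sv sa, of 1] by auto
  have mono: "y * L y \<le> y' * L y'" if "A \<le> y" "y \<le> y'" for y y'
    using A(3)[OF that] that A(1) by simp
  have sl: "((\<lambda>x. L (16 * x) / L x) \<longlongrightarrow> 1) at_top"
    using sv unfolding slowly_varying_def by auto
  have "((\<lambda>n. L (16 * b n) / L (b n)) \<longlongrightarrow> 1) sequentially"
    by (rule filterlim_compose[OF sl binf])
  hence e1: "eventually (\<lambda>n. L (16 * b n) / L (b n) > 1/2) sequentially"
    by (rule order_tendstoD(1)) simp
  have e2: "eventually (\<lambda>n. b n * \<bar>L (b n)\<bar> / real n powr (1/p) > 1/2) sequentially"
    by (rule order_tendstoD(1)[OF R]) simp
  have e3: "eventually (\<lambda>n. b n * \<bar>L (b n)\<bar> / real n powr (1/p) < 2) sequentially"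
    by (rule order_tendstoD(2)[OF R]) simp
  have e4: "eventually (\<lambda>n. b n \<ge> A) sequentially"
    using binf unfolding filterlim_at_top by blast
  have e5: "eventually (\<lambda>n. n \<ge> (1::nat)) sequentially" by simp
  obtain N where N: "\<And>n. n \<ge> N \<Longrightarrow> L (16 * b n) / L (b n) > 1/2 \<and>
      b n * \<bar>L (b n)\<bar> / real n powr (1/p) > 1/2 \<and> b n * \<bar>L (b n)\<bar> / real n powr (1/p) < 2
      \<and> b n \<ge> A \<and> n \<ge> 1"
    using eventually_conj[OF e1 eventually_conj[OF e2 eventually_conj[OF e3 eventually_conj[OF e4 e5]]]]
    unfolding eventually_sequentially by blast
  have "\<forall>m n. N \<le> m \<longrightarrow> m \<le> n \<longrightarrow> b m \<le> 16 * b n"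
  proof (intro allI impI, rule ccontr)
    fix m n assume mn: "N \<le> m" "m \<le> n" and nle: "\<not> b m \<le> 16 * b n"
    have Nn: "L (16 * b n) / L (b n) > 1/2" "b n * \<bar>L (b n)\<bar> / real n powr (1/p) > 1/2"
      "b n \<ge> A" "n \<ge> 1" using N[of n] mn by auto
    have Nm: "b m * \<bar>L (b m)\<bar> / real m powr (1/p) < 2" "b m \<ge> A" "m \<ge> 1"
      using N[of m] mn by auto
    have Lbn: "L (b n) > 0" using A(2) Nn(3) by simp
    have Lbm: "L (b m) > 0" using A(2) Nm(2) by simp
    have np: "real n powr (1/p) > 0" "real m powr (1/p) > 0" using Nn(4) Nm(3) by auto
    have bn0: "b n > 0" using Nn(3) A(1) by simp
    have "16 * b n \<ge> A" using Nn(3) bn0 by simp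
    hence "16 * b n * L (16 * b n) \<le> b m * L (b m)" using nle by (intro mono) auto
    moreover have "L (16 * b n) > L (b n) / 2" using Nn(1) Lbn by (simp add: field_simps)
    hence "16 * b n * L (16 * b n) \<ge> 16 * b n * (L (b n) / 2)"
      using bn0 by (intro mult_left_mono) auto
    moreover have "b n * L (b n) > real n powr (1/p) / 2"
      using Nn(2) np Lbn by (simp add: field_simps)
    moreover have "b m * L (b m) < 2 * real m powr (1/p)"
      using Nm(1) np Lbm by (simp add: field_simps)
    moreover have "real m powr (1/p) \<le> real n powr (1/p)"
      using mn p0 by (intro powr_mono2) auto
    ultimately show False using np by linarith
  qed
  thus ?thesis using N by (intro exI[of _ "16::real"]) (auto intro!: exI[of _ N])
qed

lemma b_lin:
  fixes L :: "real \<Rightarrow> real" and b :: "nat \<Rightarrow> real"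
  assumes hl: "c0 > 0" "\<And>y. y \<ge> A \<Longrightarrow> L y > 0 \<and> c0 * y powr (1/p) \<le> y * L y"
    and p0: "p > 0" and A0: "A > 0"
    and R: "(\<lambda>n. b n * \<bar>L (b n)\<bar> / real n powr (1/p)) \<longlonglongrightarrow> 1"
    and binf: "filterlim b at_top sequentially"
  shows "\<exists>K>0. \<exists>N. \<forall>n\<ge>N. b n \<le> K * real n"
proof -
  have e3: "eventually (\<lambda>n. b n * \<bar>L (b n)\<bar> / real n powr (1/p) < 2) sequentially"
    by (rule order_tendstoD(2)[OF R]) simp
  have e4: "eventually (\<lambda>n. b n \<ge> A) sequentially"
    using binf unfolding filterlim_at_top by blast
  have e5: "eventually (\<lambda>n. n \<ge> (1::nat)) sequentially" by simp
  obtain N where N: "\<And>n. n \<ge> N \<Longrightarrow> b n * \<bar>L (b n)\<bar> / real n powr (1/p) < 2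
      \<and> b n \<ge> A \<and> n \<ge> 1"
    using eventually_conj[OF e3 eventually_conj[OF e4 e5]]
    unfolding eventually_sequentially by blast
  define K where "K = (2 / c0) powr p"
  have "b n \<le> K * real n" if n: "n \<ge> N" for n
  proof -
    have bA: "b n \<ge> A" "n \<ge> 1" and r: "b n * \<bar>L (b n)\<bar> / real n powr (1/p) < 2"
      using N[OF n] by auto
    have Lb: "L (b n) > 0" and hb: "c0 * b n powr (1/p) \<le> b n * L (b n)" using hl(2)[OF bA(1)] by auto
    have np: "real n powr (1/p) > 0" using bA by simp
    have "b n * L (b n) < 2 * real n powr (1/p)" using r Lb np by (simp add: field_simps)
    hence "c0 * b n powr (1/p) < 2 * real n powr (1/p)" using hb by linarith
    hence lt: "b n powr (1/p) < (2 / c0) * real n powr (1/p)" using hl(1) by (simp add: field_simps)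
    have "(b n powr (1/p)) powr p < ((2 / c0) * real n powr (1/p)) powr p"
      using lt p0 by (intro powr_less_mono2) auto
    moreover have "(b n powr (1/p)) powr p = b n" using bA A0 p0 by (simp add: powr_powr)
    moreover have "((2 / c0) * real n powr (1/p)) powr p = K * (real n powr (1/p)) powr p"
      unfolding K_def using hl(1) p0 by (intro powr_mult)
    moreover have "(real n powr (1/p)) powr p = real n" using p0 by (simp add: powr_powr)
    ultimately show ?thesis by simp
  qed
  moreover have "K > 0" unfolding K_def using hl(1) by simp
  ultimately show ?thesis by blast
qed



lemma tail_lemma:
  fixes q :: "real \<Rightarrow> nat \<Rightarrow> real" and C K :: real and N :: nat
  assumes C0: "C > 0" and K0: "K > 0" and q0: "\<And>e n. q e n \<ge> 0"
    and S: "\<And>e. e > 0 \<Longrightarrow> summable (\<lambda>n. q e n / (C + real n * q e n))"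
    and mon: "\<And>e m n. e > 0 \<Longrightarrow> N \<le> m \<Longrightarrow> m \<le> n \<Longrightarrow> q e n \<le> q (e/K) m"
    and e0: "e > 0"
  shows "summable (q e)"
proof -
  define a' where "a' = (\<lambda>m. q (e/K) m / (C + real m * q (e/K) m))"
  have "summable a'" unfolding a'_def using S e0 K0 by simp
  then obtain M0 where M0: "\<And>m k. m \<ge> M0 \<Longrightarrow> norm (sum a' {m..<k}) < 1/4"
    unfolding summable_Cauchy by (meson zero_less_divide_1_iff zero_less_numeral)
  have key: "q e n \<le> 2 * C * (q e n / (C + real n * q e n))" if n: "n \<ge> 2 * (N + M0) + 2" for n
  proof -
    define x where "x = q e n"
    have x0: "x \<ge> 0" unfolding x_def using q0 by simp
    define m0 where "m0 = n div 2"
    have m0: "m0 \<ge> N" "m0 \<ge> M0" "m0 \<le> n" using n unfolding m0_def by auto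
    have tm: "a' i \<ge> x / (C + real n * x)" if i: "i \<in> {m0..<n}" for i
    proof -
      define y where "y = q (e/K) i"
      have xy: "x \<le> y" unfolding x_def y_def using mon[OF e0, of i n] i m0 by auto
      have y0: "y \<ge> 0" using x0 xy by simp
      have "x / (C + real n * x) \<le> x / (C + real i * x)"
        using i x0 C0 by (intro divide_left_mono) (auto intro!: mult_right_mono add_pos_nonneg mult_pos_pos)
      also have "\<dots> \<le> y / (C + real i * y)"
      proof -
        have d1: "C + real i * x > 0" "C + real i * y > 0" using x0 y0 C0 by (auto intro: add_pos_nonneg)
        have "x * C \<le> y * C" using xy C0 by (intro mult_right_mono) auto
        hence "x * (C + real i * y) \<le> y * (C + real i * x)" by (simp add: algebra_simps)
        thus ?thesis using d1 by (simp add: field_simps)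
      qed
      finally show ?thesis unfolding a'_def y_def by simp
    qed
    have "sum (\<lambda>i. x / (C + real n * x)) {m0..<n} \<le> sum a' {m0..<n}"
      by (rule sum_mono) (use tm in auto)
    also have "\<dots> < 1/4" using M0[OF m0(2), of n] by (smt (verit) norm_ge_zero real_norm_def)
    finally have "real (n - m0) * (x / (C + real n * x)) < 1/4" by simp
    moreover have "real (n - m0) \<ge> real n / 2" unfolding m0_def by linarith
    moreover have "x / (C + real n * x) \<ge> 0" using x0 C0 by simp
    ultimately have "real n / 2 * (x / (C + real n * x)) < 1/4"
      by (smt (verit) mult_right_mono)
    moreover have dpos: "C + real n * x > 0" using x0 C0 by (auto intro: add_pos_nonneg)
    ultimately have "real n / 2 * x < 1/4 * (C + real n * x)"
      by (simp add: field_simps)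
    hence "real n * x < C" by (simp add: field_simps)
    hence "x / (C + real n * x) \<ge> x / (2 * C)" using x0 C0 dpos
      by (intro divide_left_mono) auto
    thus ?thesis unfolding x_def using C0 by (simp add: field_simps)
  qed
  show ?thesis
  proof (rule summable_comparison_test_ev)
    show "eventually (\<lambda>n. norm (q e n) \<le> 2 * C * (q e n / (C + real n * q e n))) sequentially"
      unfolding eventually_sequentially using key q0 by (metis real_norm_def abs_of_nonneg)
    show "summable (\<lambda>n. 2 * C * (q e n / (C + real n * q e n)))"
      by (rule summable_mult[OF S[OF e0]])
  qed
qed



lemma dist_integral:
  fixes Y Z :: "'a \<Rightarrow> real" and g :: "real \<Rightarrow> real"
  assumes [measurable]: "Y \<in> borel_measurable M" "Z \<in> borel_measurable M" "g \<in> borel_measurable borel"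
    and d: "distr M borel Y = distr M borel Z"
  shows "integrable M (\<lambda>w. g (Y w)) \<longleftrightarrow> integrable M (\<lambda>w. g (Z w))"
    and "integral\<^sup>L M (\<lambda>w. g (Y w)) = integral\<^sup>L M (\<lambda>w. g (Z w))"
proof -
  show "integrable M (\<lambda>w. g (Y w)) \<longleftrightarrow> integrable M (\<lambda>w. g (Z w))"
    using integrable_distr_eq[of Y M borel g] integrable_distr_eq[of Z M borel g] d by simp
  show "integral\<^sup>L M (\<lambda>w. g (Y w)) = integral\<^sup>L M (\<lambda>w. g (Z w))"
    using integral_distr[of Y M borel g] integral_distr[of Z M borel g] d by simp
qed

lemma dist_measure:
  fixes Y Z :: "'a \<Rightarrow> real"
  assumes [measurable]: "Y \<in> borel_measurable M" "Z \<in> borel_measurable M" "S \<in> sets borel"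
    and d: "distr M borel Y = distr M borel Z"
  shows "measure M {w\<in>space M. Y w \<in> S} = measure M {w\<in>space M. Z w \<in> S}"
proof -
  have "measure M {w\<in>space M. Y w \<in> S} = measure (distr M borel Y) S"
    by (subst measure_distr) (auto intro!: arg_cong[where f="measure M"])
  also have "\<dots> = measure (distr M borel Z) S" using d by simp
  also have "\<dots> = measure M {w\<in>space M. Z w \<in> S}"
    by (subst measure_distr) (auto intro!: arg_cong[where f="measure M"])
  finally show ?thesis .
qed

lemma variance_neg:
  fixes Y :: "'a \<Rightarrow> real"
  shows "prob_space.variance M (\<lambda>w. - Y w) = prob_space.variance M Y"
proof -
  have "(\<integral>w. - Y w \<partial>M) = - (\<integral>w. Y w \<partial>M)" by (rule integral_minus)
  thus ?thesis by (simp add: power2_commute)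
qed

lemma PZ:
  fixes M :: "'a measure" and X :: "nat \<Rightarrow> 'a \<Rightarrow> real" and C :: real and T :: "real set"
  assumes ps: "prob_space M" and meas[measurable]: "\<And>i. X i \<in> borel_measurable M"
    and idd: "\<And>i. i \<ge> 1 \<Longrightarrow> distr M borel (X i) = distr M borel (X 1)"
    and C0: "C > 0"
    and V: "\<And>f. (\<forall>i. mono (f i)) \<Longrightarrow> (\<forall>i\<in>{1..n}. integrable M (\<lambda>w. (f i (X i w))\<^sup>2)) \<Longrightarrow>
        prob_space.variance M (\<lambda>w. \<Sum>i\<in>{1..n}. f i (X i w))
          \<le> C * (\<Sum>i\<in>{1..n}. prob_space.variance M (\<lambda>w. f i (X i w)))"
    and T[measurable]: "T \<in> sets borel"
    and sg: "mono (\<lambda>x::real. indicator T x :: real) \<or> mono (\<lambda>x::real. - indicator T x :: real)"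
  shows "real n * measure M {w\<in>space M. X 1 w \<in> T} / (C + real n * measure M {w\<in>space M. X 1 w \<in> T})
      \<le> measure M {w\<in>space M. \<exists>j\<in>{1..n}. X j w \<in> T}"
proof -
  interpret prob_space M by (rule ps)
  define q where "q = measure M {w\<in>space M. X 1 w \<in> T}"
  define I where "I = (\<lambda>j w. indicator T (X j w) :: real)"
  define N where "N = (\<lambda>w. \<Sum>j\<in>{1..n}. I j w)"
  define P where "P = measure M {w\<in>space M. \<exists>j\<in>{1..n}. X j w \<in> T}"
  have Imeas[measurable]: "I j \<in> borel_measurable M" for j unfolding I_def by measurable
  have Nmeas[measurable]: "N \<in> borel_measurable M" unfolding N_def by measurable
  have Iint: "integrable M (I j)" for j
    by (rule integrable_const_bound[where B=1]) (auto simp: I_def indicator_def)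
  have I01: "I j w = 0 \<or> I j w = 1" for j w unfolding I_def indicator_def by auto
  have I2: "(I j w)\<^sup>2 = I j w" for j w using I01[of j w] by auto
  have EI: "expectation (I j) = q" if "j \<in> {1..n}" for j
  proof -
    have "expectation (I j) = expectation (I 1)"
      unfolding I_def using that by (intro dist_integral(2) idd) auto
    also have "\<dots> = expectation (indicator {w\<in>space M. X 1 w \<in> T})"
      by (rule Bochner_Integration.integral_cong) (auto simp: I_def indicator_def)
    also have "\<dots> = q" unfolding q_def
      by (simp add: Int_absorb2 subsetI)
    finally show ?thesis .
  qed
  have N0: "N w \<ge> 0" for w unfolding N_def using I01 by (intro sum_nonneg) (metis order_refl zero_le_one)
  have Nbd: "N w \<le> real n" for w
  proof -
    have "N w \<le> (\<Sum>j\<in>{1..n}. 1)" unfolding N_def using I01 by (intro sum_mono) (metis order_refl zero_le_one)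
    thus ?thesis by simp
  qed
  have Nint: "integrable M N" by (rule integrable_const_bound[where B="real n"]) (use N0 Nbd in auto)
  have N2int: "integrable M (\<lambda>w. (N w)\<^sup>2)"
    by (rule integrable_const_bound[where B="real n ^ 2"]) (use N0 Nbd in \<open>auto intro!: power_mono\<close>)
  have EN: "expectation N = real n * q"
    unfolding N_def using EI by (simp add: Iint)
  have varI: "variance (I j) \<le> q" if "j \<in> {1..n}" for j
  proof -
    have "variance (I j) = expectation (\<lambda>w. (I j w)\<^sup>2) - (expectation (I j))\<^sup>2"
      by (rule variance_eq) (auto simp: Iint I2)
    also have "\<dots> = q - q\<^sup>2" using EI[OF that] by (simp add: I2)
    finally show ?thesis by simp
  qed
  have varN: "variance N \<le> C * (real n * q)"
  proof -
    have "variance N \<le> C * (\<Sum>j\<in>{1..n}. variance (I j))"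
    proof (cases "mono (\<lambda>x::real. indicator T x :: real)")
      case True
      have "variance (\<lambda>w. \<Sum>i\<in>{1..n}. (\<lambda>i. \<lambda>x. indicator T x :: real) i (X i w))
          \<le> C * (\<Sum>i\<in>{1..n}. variance (\<lambda>w. (\<lambda>i. \<lambda>x. indicator T x :: real) i (X i w)))"
        by (rule V) (use True Iint I2 in \<open>auto simp: I_def\<close>)
      thus ?thesis unfolding N_def I_def by simp
    next
      case False
      hence mono: "mono (\<lambda>x::real. - indicator T x :: real)" using sg by simp
      have H: "variance (\<lambda>w. \<Sum>i\<in>{1..n}. - indicator T (X i w) :: real)
          \<le> C * (\<Sum>i\<in>{1..n}. variance (\<lambda>w. - indicator T (X i w) :: real))"
        by (rule V) (use mono Iint I2 in \<open>auto simp: I_def\<close>)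
      have eq1: "\<And>w. (\<Sum>i\<in>{1..n}. - indicator T (X i w) :: real) = - N w"
        unfolding N_def I_def by (simp add: sum_negf)
      have eq2: "(\<Sum>i\<in>{1..n}. variance (\<lambda>w. - indicator T (X i w) :: real))
          = (\<Sum>i\<in>{1..n}. variance (I i))"
        by (rule sum.cong[OF refl]) (simp only: I_def variance_neg[of M "\<lambda>w. indicator T (X _ w)"])
      have "variance (\<lambda>w. - N w) \<le> C * (\<Sum>i\<in>{1..n}. variance (I i))"
        using H by (simp only: eq1 eq2)
      thus ?thesis unfolding variance_neg[of M N] .
    qed
    also have "\<dots> \<le> C * (\<Sum>j\<in>{1..n}. q)"
      using C0 varI by (intro mult_left_mono sum_mono) auto
    finally show ?thesis by simp
  qed
  have EN2: "expectation (\<lambda>w. (N w)\<^sup>2) \<le> C * (real n * q) + (real n * q)\<^sup>2"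
  proof -
    have "variance N = expectation (\<lambda>w. (N w)\<^sup>2) - (expectation N)\<^sup>2"
      by (rule variance_eq) (use Nint N2int in auto)
    thus ?thesis using varN EN by simp
  qed
  define a where "a = C + real n * q"
  have q0: "q \<ge> 0" unfolding q_def by simp
  have a0: "a > 0" unfolding a_def using C0 q0 by (simp add: add_pos_nonneg)
  define J where "J = (indicator {w\<in>space M. \<exists>j\<in>{1..n}. X j w \<in> T} :: 'a \<Rightarrow> real)"
  have Jmeas[measurable]: "J \<in> borel_measurable M" unfolding J_def by measurable
  have Jint: "integrable M J" by (rule integrable_const_bound[where B=1]) (auto simp: J_def indicator_def)
  have EJ: "expectation J = P" unfolding J_def P_def by (simp add: Int_absorb2 subsetI)
  have pw: "2 * a * N w \<le> a\<^sup>2 * J w + (N w)\<^sup>2" if w: "w \<in> space M" for w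
  proof (cases "\<exists>j\<in>{1..n}. X j w \<in> T")
    case True
    hence "J w = 1" unfolding J_def using w by simp
    moreover have "0 \<le> (a - N w)\<^sup>2" by simp
    ultimately show ?thesis by (simp add: power2_diff)
  next
    case False
    hence "N w = 0" unfolding N_def I_def by (simp add: indicator_def)
    thus ?thesis unfolding J_def by simp
  qed
  have "expectation (\<lambda>w. 2 * a * N w) \<le> expectation (\<lambda>w. a\<^sup>2 * J w + (N w)\<^sup>2)"
    by (rule integral_mono) (use pw Nint Jint N2int in auto)
  hence "2 * a * (real n * q) \<le> a\<^sup>2 * P + expectation (\<lambda>w. (N w)\<^sup>2)"
    using Jint N2int Nint EN EJ by simp
  hence "2 * a * (real n * q) \<le> a\<^sup>2 * P + a * (real n * q)"
    using EN2 unfolding a_def by (simp add: power2_eq_square algebra_simps)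
  hence "a * (real n * q) \<le> a * (a * P)" by (simp add: power2_eq_square algebra_simps)
  hence "real n * q \<le> a * P" using a0 by simp
  hence "real n * q / a \<le> P" using a0 by (simp add: field_simps)
  thus ?thesis unfolding a_def q_def P_def .
qed



lemma max_event:
  fixes X :: "nat \<Rightarrow> 'a \<Rightarrow> real"
  assumes s0: "s \<ge> 0" and j: "j \<in> {1..n}" and big: "\<bar>X j w - c\<bar> > 2 * s"
  shows "(MAX k\<in>{1..n}. \<bar>\<Sum>i=1..k. (X i w - c)\<bar>) > s"
proof -
  define S where "S = (\<lambda>k. \<Sum>i=1..k. (X i w - c))"
  have fin: "finite {1..n}" and ne: "{1..n} \<noteq> {}" using j by auto
  have Sj: "S j = S (j - 1) + (X j w - c)"
    using j unfolding S_def by (cases j) auto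
  have S0: "S 0 = 0" unfolding S_def by simp
  have "\<bar>S j\<bar> > s \<or> \<bar>S (j - 1)\<bar> > s" using Sj big by linarith
  then show ?thesis
  proof
    assume "\<bar>S j\<bar> > s"
    moreover have "\<bar>S j\<bar> \<le> (MAX k\<in>{1..n}. \<bar>S k\<bar>)" using j fin by (intro Max_ge) auto
    ultimately show ?thesis unfolding S_def by linarith
  next
    assume a: "\<bar>S (j - 1)\<bar> > s"
    hence "j - 1 \<noteq> 0" using S0 s0 by auto
    hence "j - 1 \<in> {1..n}" using j by auto
    hence "\<bar>S (j - 1)\<bar> \<le> (MAX k\<in>{1..n}. \<bar>S k\<bar>)" using fin by (intro Max_ge) auto
    thus ?thesis using a unfolding S_def by linarith
  qed
qed

lemma max_ge_sum:
  fixes X :: "nat \<Rightarrow> 'a \<Rightarrow> real"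
  assumes "n \<ge> 1"
  shows "\<bar>(\<Sum>i=1..n. X i w) - real n * c\<bar> \<le> (MAX k\<in>{1..n}. \<bar>\<Sum>i=1..k. (X i w - c)\<bar>)"
proof -
  have "(\<Sum>i=1..n. X i w) - real n * c = (\<Sum>i=1..n. (X i w - c))"
    by (simp add: sum_subtractf)
  moreover have "\<bar>\<Sum>i=1..n. (X i w - c)\<bar> \<le> (MAX k\<in>{1..n}. \<bar>\<Sum>i=1..k. (X i w - c)\<bar>)"
    using assms by (intro Max_ge) auto
  ultimately show ?thesis by simp
qed

lemma integrable_from_tails:
  fixes W :: "'a \<Rightarrow> real"
  assumes ps: "prob_space M" and Wm[measurable]: "W \<in> borel_measurable M" and W0: "\<And>w. W w \<ge> 0"
    and K0: "K > 0"
    and S: "summable (\<lambda>n. measure M {w\<in>space M. W w > K * real n})"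
  shows "integrable M W"
proof -
  interpret prob_space M by (rule ps)
  define V where "V = (\<lambda>w. W w / K)"
  have Vm[measurable]: "V \<in> borel_measurable M" unfolding V_def by measurable
  have ev: "{w\<in>space M. V w > real n} = {w\<in>space M. W w > K * real n}" for n
    unfolding V_def using K0 by (auto simp: field_simps)
  have pw: "ennreal (V w) \<le> (\<Sum>n. indicator {w\<in>space M. V w > real n} w)" if w: "w \<in> space M" for w
  proof -
    define k where "k = nat \<lceil>V w\<rceil>"
    have "(\<Sum>n<k. indicator {w\<in>space M. V w > real n} w :: ennreal) = (\<Sum>n<k. 1)"
    proof (rule sum.cong[OF refl])
      fix n assume "n \<in> {..<k}"
      hence "int n < \<lceil>V w\<rceil>" unfolding k_def by simp
      hence "of_int (int n) < V w" by (simp only: less_ceiling_iff)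
      hence "real n < V w" by simp
      thus "indicator {w\<in>space M. V w > real n} w = (1::ennreal)" using w by simp
    qed
    also have "\<dots> = ennreal (real k)" by (simp add: ennreal_of_nat_eq_real_of_nat)
    also have "ennreal (V w) \<le> ennreal (real k)" unfolding k_def
      by (intro ennreal_leI) linarith
    ultimately have "ennreal (V w) \<le> (\<Sum>n<k. indicator {w\<in>space M. V w > real n} w)" by simp
    also have "\<dots> \<le> (\<Sum>n. indicator {w\<in>space M. V w > real n} w)"
      by (rule sum_le_suminf) auto
    finally show ?thesis .
  qed
  have "(\<integral>\<^sup>+w. ennreal (V w) \<partial>M) \<le> (\<integral>\<^sup>+w. (\<Sum>n. indicator {w\<in>space M. V w > real n} w) \<partial>M)"
    by (rule nn_integral_mono) (use pw in auto)
  also have "\<dots> = (\<Sum>n. \<integral>\<^sup>+w. indicator {w\<in>space M. V w > real n} w \<partial>M)"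
    by (rule nn_integral_suminf) measurable
  also have "\<dots> = (\<Sum>n. ennreal (measure M {w\<in>space M. W w > K * real n}))"
    by (simp add: ev emeasure_eq_measure)
  also have "\<dots> < \<infinity>"
    using S by (simp add: suminf_ennreal2 measure_nonneg)
  finally have fin: "(\<integral>\<^sup>+w. ennreal (V w) \<partial>M) < \<infinity>" .
  have "integrable M V"
    by (rule integrableI_bounded) (use fin W0 K0 in \<open>auto simp: V_def\<close>)
  hence "integrable M (\<lambda>w. K * V w)" by simp
  thus ?thesis unfolding V_def using K0 by simp
qed

lemma io_small:
  fixes a :: "nat \<Rightarrow> real"
  assumes S: "summable (\<lambda>n. a n / real n)" and a0: "\<And>n. a n \<ge> 0" and d: "\<delta> > 0"
  shows "\<exists>n\<ge>N. a n < \<delta>"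
proof (rule ccontr)
  assume "\<not> ?thesis"
  hence ge: "\<And>n. n \<ge> N \<Longrightarrow> a n \<ge> \<delta>" by force
  have "summable (\<lambda>n. inverse (real n))"
  proof (rule summable_comparison_test_ev)
    show "eventually (\<lambda>n. norm (inverse (real n)) \<le> a n / real n / \<delta>) sequentially"
      unfolding eventually_sequentially
    proof (intro exI[of _ N] allI impI)
      fix n assume "n \<ge> N"
      hence "a n \<ge> \<delta>" by (rule ge)
      thus "norm (inverse (real n)) \<le> a n / real n / \<delta>"
        using d by (cases "n = 0") (auto simp: field_simps)
    qed
    show "summable (\<lambda>n. a n / real n / \<delta>)" by (rule summable_divide[OF S])
  qed
  thus False using not_summable_harmonic by blast
qed



lemma W_bound:
  fixes L Lt :: "real \<Rightarrow> real" and b :: "nat \<Rightarrow> real" and c p :: real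
  assumes sv: "slowly_varying L" and sa: "standing_assumptions L Lt" and p0: "p > 0"
    and cont: "continuous_on {0..} L"
    and R: "(\<lambda>n. b n * \<bar>L (b n)\<bar> / real n powr (1/p)) \<longlonglongrightarrow> 1"
    and binf: "filterlim b at_top sequentially"
  shows "\<exists>K>0. \<exists>N\<ge>1. \<forall>n\<ge>N. \<forall>x. \<bar>x - c\<bar> \<le> b n \<longrightarrow> (\<bar>x\<bar> * \<bar>L \<bar>x\<bar>\<bar>) powr p \<le> K * real n"
proof -
  obtain A where A: "A > 0" "\<And>y. y \<ge> A \<Longrightarrow> L y > 0"
    "\<And>y y'. A \<le> y \<Longrightarrow> y \<le> y' \<Longrightarrow> y powr 1 * L y \<le> y' powr 1 * L y'"
    using mono_powr_L[OF sv sa, of 1] by auto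
  have mono: "y * L y \<le> y' * L y'" if "A \<le> y" "y \<le> y'" for y y'
    using A(3)[OF that] that A(1) by simp
  obtain B where B: "B > 0" "\<And>y. y \<in> {0..A} \<Longrightarrow> \<bar>L y\<bar> \<le> B"
    using L_bdd[OF cont, of A] by blast
  have sl: "((\<lambda>x. L (2 * x) / L x) \<longlongrightarrow> 1) at_top"
    using sv unfolding slowly_varying_def by auto
  have "((\<lambda>n. L (2 * b n) / L (b n)) \<longlongrightarrow> 1) sequentially"
    by (rule filterlim_compose[OF sl binf])
  hence e1: "eventually (\<lambda>n. L (2 * b n) / L (b n) < 2) sequentially"
    by (rule order_tendstoD(2)) simp
  have e3: "eventually (\<lambda>n. b n * \<bar>L (b n)\<bar> / real n powr (1/p) < 2) sequentially"
    by (rule order_tendstoD(2)[OF R]) simp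
  have e4: "eventually (\<lambda>n. b n \<ge> max A \<bar>c\<bar>) sequentially"
    using binf unfolding filterlim_at_top by blast
  have e5: "eventually (\<lambda>n. n \<ge> (1::nat)) sequentially" by simp
  obtain N where N: "\<And>n. n \<ge> N \<Longrightarrow> L (2 * b n) / L (b n) < 2 \<and>
      b n * \<bar>L (b n)\<bar> / real n powr (1/p) < 2 \<and> b n \<ge> max A \<bar>c\<bar> \<and> n \<ge> 1"
    using eventually_conj[OF e1 eventually_conj[OF e3 eventually_conj[OF e4 e5]]]
    unfolding eventually_sequentially by blast
  define K where "K = (A * B) powr p + 8 powr p + 1"
  have K0: "K > 0" unfolding K_def by (simp add: add_nonneg_pos)
  have "\<forall>n\<ge>max N 1. \<forall>x. \<bar>x - c\<bar> \<le> b n \<longrightarrow> (\<bar>x\<bar> * \<bar>L \<bar>x\<bar>\<bar>) powr p \<le> K * real n"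
  proof (intro allI impI)
    fix n x assume n: "n \<ge> max N 1" and x: "\<bar>x - c\<bar> \<le> b n"
    have Nn: "L (2 * b n) / L (b n) < 2" "b n * \<bar>L (b n)\<bar> / real n powr (1/p) < 2"
      "b n \<ge> A" "b n \<ge> \<bar>c\<bar>" "n \<ge> 1" using N[of n] n by auto
    have n1: "real n \<ge> 1" using Nn(5) by simp
    have Kn: "K \<le> K * real n" using K0 n1 by simp
    show "(\<bar>x\<bar> * \<bar>L \<bar>x\<bar>\<bar>) powr p \<le> K * real n"
    proof (cases "\<bar>x\<bar> \<le> A")
      case True
      have "\<bar>x\<bar> * \<bar>L \<bar>x\<bar>\<bar> \<le> A * B" using True B(2)[of "\<bar>x\<bar>"] by (intro mult_mono) auto
      hence "(\<bar>x\<bar> * \<bar>L \<bar>x\<bar>\<bar>) powr p \<le> (A * B) powr p" using p0 by (intro powr_mono2) auto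
      also have "\<dots> \<le> K" unfolding K_def by simp
      finally show ?thesis using Kn by linarith
    next
      case False
      have Lbn: "L (b n) > 0" using A(2) Nn(3) by simp
      have Lx: "L \<bar>x\<bar> > 0" using A(2) False by simp
      have np: "real n powr (1/p) > 0" using n1 by simp
      have xb: "\<bar>x\<bar> \<le> 2 * b n" using x Nn(4) by linarith
      have "\<bar>x\<bar> * \<bar>L \<bar>x\<bar>\<bar> = \<bar>x\<bar> * L \<bar>x\<bar>" using Lx by simp
      also have "\<dots> \<le> 2 * b n * L (2 * b n)" using False xb by (intro mono) auto
      also have "\<dots> \<le> 2 * b n * (2 * L (b n))"
        using Nn(1) Lbn Nn(3) A(1) by (intro mult_left_mono) (auto simp: field_simps)
      also have "\<dots> = 4 * (b n * \<bar>L (b n)\<bar>)" using Lbn by simp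
      also have "\<dots> \<le> 4 * (2 * real n powr (1/p))"
        using Nn(2) np by (simp add: field_simps)
      finally have le: "\<bar>x\<bar> * \<bar>L \<bar>x\<bar>\<bar> \<le> 8 * real n powr (1/p)" by simp
      hence "(\<bar>x\<bar> * \<bar>L \<bar>x\<bar>\<bar>) powr p \<le> (8 * real n powr (1/p)) powr p"
        using p0 by (intro powr_mono2) auto
      also have "\<dots> = 8 powr p * (real n powr (1/p)) powr p" by (intro powr_mult)
      also have "\<dots> = 8 powr p * real n" using p0 by (simp add: powr_powr)
      also have "\<dots> \<le> K * real n" unfolding K_def using n1
        by (intro mult_right_mono) auto
      finally show ?thesis .
    qed
  qed
  thus ?thesis using K0 by (intro exI[of _ K] conjI exI[of _ "max N 1"]) auto
qed



definition tr :: "nat \<Rightarrow> real \<Rightarrow> real" where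
  "tr k x = max (- real k) (min (real k) x)"

lemma tr_facts:
  shows "\<bar>tr k x\<bar> \<le> real k" "\<bar>tr k x\<bar> \<le> \<bar>x\<bar>" "mono (tr k)"
    "\<bar>x\<bar> \<le> real k \<Longrightarrow> tr k x = x" "\<bar>x - tr k x\<bar> \<le> \<bar>x\<bar>"
    "(tr k x)\<^sup>2 \<le> real k * \<bar>x\<bar>"
proof -
  show 1: "\<bar>tr k x\<bar> \<le> real k" unfolding tr_def by auto
  show 2: "\<bar>tr k x\<bar> \<le> \<bar>x\<bar>" unfolding tr_def by auto
  show "mono (tr k)" unfolding tr_def mono_def by auto
  show "\<bar>x\<bar> \<le> real k \<Longrightarrow> tr k x = x" unfolding tr_def by auto
  show "\<bar>x - tr k x\<bar> \<le> \<bar>x\<bar>" unfolding tr_def by auto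
  have "(tr k x)\<^sup>2 = \<bar>tr k x\<bar> * \<bar>tr k x\<bar>" by (simp add: power2_eq_square)
  also have "\<dots> \<le> real k * \<bar>x\<bar>" using 1 2 by (intro mult_mono) auto
  finally show "(tr k x)\<^sup>2 \<le> real k * \<bar>x\<bar>" .
qed

lemma tr_meas[measurable]: "tr k \<in> borel_measurable borel"
  by (rule borel_measurable_mono[OF tr_facts(3)])

lemma wlln:
  fixes M :: "'a measure" and X :: "nat \<Rightarrow> 'a \<Rightarrow> real" and C :: real
  assumes ps: "prob_space M" and meas[measurable]: "\<And>i. X i \<in> borel_measurable M"
    and idd: "\<And>i. i \<ge> 1 \<Longrightarrow> distr M borel (X i) = distr M borel (X 1)"
    and C0: "C > 0"
    and V: "\<And>n f. n \<ge> 1 \<Longrightarrow> (\<forall>i. mono (f i)) \<Longrightarrow> (\<forall>i\<in>{1..n}. integrable M (\<lambda>w. (f i (X i w))\<^sup>2)) \<Longrightarrow>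
        prob_space.variance M (\<lambda>w. \<Sum>i\<in>{1..n}. f i (X i w))
          \<le> C * (\<Sum>i\<in>{1..n}. prob_space.variance M (\<lambda>w. f i (X i w)))"
    and int1: "integrable M (X 1)" and e0: "\<epsilon> > 0" and d0: "\<delta> > 0"
  shows "eventually (\<lambda>n. measure M {w\<in>space M. \<bar>(\<Sum>i=1..n. X i w) - real n * integral\<^sup>L M (X 1)\<bar>
            > 3 * \<epsilon> * real n} < \<delta>) sequentially"
proof -
  interpret prob_space M by (rule ps)
  define \<mu> where "\<mu> = expectation (X 1)"
  have intX: "integrable M (X i)" if "i \<ge> 1" for i
  proof -
    have "integrable M (\<lambda>w. (\<lambda>x. x) (X i w)) \<longleftrightarrow> integrable M (\<lambda>w. (\<lambda>x. x) (X 1 w))"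
      by (rule dist_integral(1)) (measurable, rule idd[OF that])
    thus ?thesis using int1 by simp
  qed
  have intA: "integrable M (\<lambda>w. \<bar>X 1 w\<bar>)" using int1 by simp
  define a where "a = (\<lambda>k. expectation (\<lambda>w. \<bar>X 1 w - tr k (X 1 w)\<bar>))"
  define v where "v = (\<lambda>k. expectation (\<lambda>w. (tr k (X 1 w))\<^sup>2 / real k))"
  have alim: "a \<longlonglongrightarrow> 0"
  proof -
    have "(\<lambda>k. expectation (\<lambda>w. \<bar>X 1 w - tr k (X 1 w)\<bar>)) \<longlonglongrightarrow> expectation (\<lambda>w. 0)"
    proof (rule integral_dominated_convergence[where w="\<lambda>w. \<bar>X 1 w\<bar>"])
      show "AE w in M. (\<lambda>k. \<bar>X 1 w - tr k (X 1 w)\<bar>) \<longlonglongrightarrow> 0"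
      proof (intro AE_I2 tendsto_eventually)
        fix w
        show "eventually (\<lambda>k. \<bar>X 1 w - tr k (X 1 w)\<bar> = 0) sequentially"
          unfolding eventually_sequentially
          by (intro exI[of _ "nat \<lceil>\<bar>X 1 w\<bar>\<rceil>"] allI impI) (simp add: tr_facts(4) ceiling_le_iff)
      qed
      show "AE w in M. norm \<bar>X 1 w - tr k (X 1 w)\<bar> \<le> \<bar>X 1 w\<bar>" for k
        using tr_facts(5) by simp
    qed (use intA in auto)
    thus ?thesis unfolding a_def by simp
  qed
  have vlim: "v \<longlonglongrightarrow> 0"
  proof -
    have "(\<lambda>k. expectation (\<lambda>w. (tr k (X 1 w))\<^sup>2 / real k)) \<longlonglongrightarrow> expectation (\<lambda>w. 0)"
    proof (rule integral_dominated_convergence[where w="\<lambda>w. \<bar>X 1 w\<bar>"])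
      show "AE w in M. (\<lambda>k. (tr k (X 1 w))\<^sup>2 / real k) \<longlonglongrightarrow> 0"
      proof (intro AE_I2)
        fix w
        have ev: "eventually (\<lambda>k. (X 1 w)\<^sup>2 / real k = (tr k (X 1 w))\<^sup>2 / real k) sequentially"
          unfolding eventually_sequentially
          by (intro exI[of _ "nat \<lceil>\<bar>X 1 w\<bar>\<rceil>"] allI impI) (simp add: tr_facts(4) ceiling_le_iff)
        show "(\<lambda>k. (tr k (X 1 w))\<^sup>2 / real k) \<longlonglongrightarrow> 0"
          by (rule Lim_transform_eventually[OF lim_const_over_n ev])
      qed
      show "AE w in M. norm ((tr k (X 1 w))\<^sup>2 / real k) \<le> \<bar>X 1 w\<bar>" for k
      proof (intro AE_I2)
        fix w
        show "norm ((tr k (X 1 w))\<^sup>2 / real k) \<le> \<bar>X 1 w\<bar>"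
        proof (cases "k = 0")
          case False
          thus ?thesis using tr_facts(6)[of k "X 1 w"] by (simp add: field_simps)
        qed simp
      qed
    qed (use intA in auto)
    thus ?thesis unfolding v_def by simp
  qed
  have "(\<lambda>n. a n / \<epsilon> + C * v n / \<epsilon>\<^sup>2) \<longlonglongrightarrow> 0 / \<epsilon> + C * 0 / \<epsilon>\<^sup>2"
    by (intro tendsto_intros alim vlim) (use e0 in auto)
  hence ev1: "eventually (\<lambda>n. a n / \<epsilon> + C * v n / \<epsilon>\<^sup>2 < \<delta>) sequentially"
    by (rule order_tendstoD(2)) (use d0 in simp)
  have ev2: "eventually (\<lambda>n. a n < \<epsilon>) sequentially"
    by (rule order_tendstoD(2)[OF alim e0])
  have ev3: "eventually (\<lambda>n. n \<ge> (1::nat)) sequentially" by simp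
  show ?thesis
    using ev1 ev2 ev3
  proof eventually_elim
    case (elim n)
    define T where "T = (\<lambda>w. \<Sum>i=1..n. tr n (X i w))"
    define D where "D = (\<lambda>w. \<Sum>i=1..n. \<bar>X i w - tr n (X i w)\<bar>)"
    define S where "S = (\<lambda>w. \<Sum>i=1..n. X i w)"
    have n1: "real n \<ge> 1" using elim by simp
    have trint: "integrable M (\<lambda>w. tr n (X i w))" for i
      by (rule integrable_const_bound[where B="real n"]) (auto simp: tr_facts(1))
    have tr2int: "integrable M (\<lambda>w. (tr n (X i w))\<^sup>2)" for i
      by (rule integrable_const_bound[where B="real n ^ 2"])
         (auto simp: tr_facts(1) abs_le_square_iff[symmetric])
    have dint: "integrable M (\<lambda>w. \<bar>X i w - tr n (X i w)\<bar>)" if "i \<ge> 1" for i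
      using intX[OF that] trint[of i] by auto
    have Tm[measurable]: "T \<in> borel_measurable M" unfolding T_def by measurable
    have Dm[measurable]: "D \<in> borel_measurable M" unfolding D_def by measurable
    have Tint: "integrable M T" unfolding T_def using trint by auto
    have Tb: "\<bar>T w\<bar> \<le> real n * real n" for w
    proof -
      have "\<bar>T w\<bar> \<le> (\<Sum>i=1..n. \<bar>tr n (X i w)\<bar>)" unfolding T_def by (rule sum_abs)
      also have "\<dots> \<le> (\<Sum>i=1..n. real n)" by (rule sum_mono) (rule tr_facts(1))
      finally show ?thesis by simp
    qed
    have T2b: "norm ((T w)\<^sup>2) \<le> (real n * real n)\<^sup>2" for w
    proof -
      have "norm ((T w)\<^sup>2) = \<bar>T w\<bar>\<^sup>2" by simp
      also have "\<dots> \<le> (real n * real n)\<^sup>2" by (rule power_mono[OF Tb]) simp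
      finally show ?thesis .
    qed
    have T2int: "integrable M (\<lambda>w. (T w)\<^sup>2)"
      by (rule integrable_const_bound[where B="(real n * real n)\<^sup>2"]) (use T2b in auto)
    have Dint: "integrable M D" unfolding D_def using dint by auto
    have DI: "expectation (\<lambda>w. g (X i w)) = expectation (\<lambda>w. g (X 1 w))"
      if "g \<in> borel_measurable borel" "i \<ge> 1" for g :: "real \<Rightarrow> real" and i
      apply (rule dist_integral(2)[of "X i" M "X 1" g])
      apply (rule meas)
      apply (rule meas)
      apply (rule that(1))
      by (rule idd[OF that(2)])
    have m1: "(\<lambda>x. (tr n x)\<^sup>2) \<in> borel_measurable borel" by measurable
    have m2: "(\<lambda>x::real. x) \<in> borel_measurable borel" by measurable
    have m3: "(\<lambda>x. \<bar>x - tr n x\<bar>) \<in> borel_measurable borel" by measurable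
    have Etr: "expectation (\<lambda>w. tr n (X i w)) = expectation (\<lambda>w. tr n (X 1 w))" if "i \<in> {1..n}" for i
      by (rule DI[OF tr_meas]) (use that in auto)
    have Etr2: "expectation (\<lambda>w. (tr n (X i w))\<^sup>2) = expectation (\<lambda>w. (tr n (X 1 w))\<^sup>2)"
      if "i \<in> {1..n}" for i
      by (rule DI[OF m1]) (use that in auto)
    have EX: "expectation (X i) = \<mu>" if "i \<in> {1..n}" for i
      using DI[OF m2, of i] that unfolding \<mu>_def by auto
    have Ed: "expectation (\<lambda>w. \<bar>X i w - tr n (X i w)\<bar>) = a n" if "i \<in> {1..n}" for i
      unfolding a_def by (rule DI[OF m3]) (use that in auto)
    have ED: "expectation D = real n * a n"
    proof -
      have "expectation D = (\<Sum>i\<in>{1..n}. expectation (\<lambda>w. \<bar>X i w - tr n (X i w)\<bar>))"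
        unfolding D_def by (rule Bochner_Integration.integral_sum) (rule dint, simp)
      also have "\<dots> = (\<Sum>i\<in>{1..n}. a n)" by (rule sum.cong[OF refl Ed])
      finally show ?thesis by simp
    qed
    have ET: "expectation T = real n * expectation (\<lambda>w. tr n (X 1 w))"
    proof -
      have "expectation T = (\<Sum>i\<in>{1..n}. expectation (\<lambda>w. tr n (X i w)))"
        unfolding T_def by (rule Bochner_Integration.integral_sum) (rule trint)
      also have "\<dots> = (\<Sum>i\<in>{1..n}. expectation (\<lambda>w. tr n (X 1 w)))" by (rule sum.cong[OF refl Etr])
      finally show ?thesis by simp
    qed
    have bias: "\<bar>expectation T - real n * \<mu>\<bar> \<le> real n * a n"
    proof -
      have "expectation (\<lambda>w. tr n (X 1 w)) - \<mu> = expectation (\<lambda>w. tr n (X 1 w) - X 1 w)"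
        unfolding \<mu>_def using trint int1 by simp
      hence "\<bar>expectation (\<lambda>w. tr n (X 1 w)) - \<mu>\<bar> \<le> expectation (\<lambda>w. \<bar>tr n (X 1 w) - X 1 w\<bar>)"
        by simp
      also have "\<dots> = a n" unfolding a_def by (simp add: abs_minus_commute)
      finally have "\<bar>expectation (\<lambda>w. tr n (X 1 w)) - \<mu>\<bar> \<le> a n" .
      hence "real n * \<bar>expectation (\<lambda>w. tr n (X 1 w)) - \<mu>\<bar> \<le> real n * a n"
        by (intro mult_left_mono) auto
      thus ?thesis unfolding ET by (simp add: abs_mult right_diff_distrib[symmetric])
    qed
    have varT: "variance T \<le> C * (real n * (real n * v n))"
    proof -
      have "variance T \<le> C * (\<Sum>i\<in>{1..n}. variance (\<lambda>w. tr n (X i w)))"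
        unfolding T_def
        by (rule V[of n "\<lambda>_. tr n"]) (use elim tr_facts(3) tr2int in auto)
      also have "\<dots> \<le> C * (\<Sum>i\<in>{1..n}. real n * v n)"
      proof (intro mult_left_mono sum_mono)
        fix i assume i: "i \<in> {1..n}"
        have "variance (\<lambda>w. tr n (X i w)) = expectation (\<lambda>w. (tr n (X i w))\<^sup>2)
              - (expectation (\<lambda>w. tr n (X i w)))\<^sup>2"
          by (rule variance_eq) (use trint tr2int in auto)
        also have "\<dots> \<le> expectation (\<lambda>w. (tr n (X i w))\<^sup>2)" by simp
        also have "\<dots> = expectation (\<lambda>w. (tr n (X 1 w))\<^sup>2)" by (rule Etr2[OF i])
        also have "\<dots> = real n * v n" unfolding v_def using n1 by simp
        finally show "variance (\<lambda>w. tr n (X i w)) \<le> real n * v n" .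
      qed (use C0 in auto)
      finally show ?thesis by simp
    qed
    define en where "en = \<epsilon> * real n"
    have en0: "en > 0" unfolding en_def using e0 n1 by simp
    have cheb: "measure M {w\<in>space M. \<bar>T w - expectation T\<bar> \<ge> en} \<le> C * v n / \<epsilon>\<^sup>2"
    proof -
      have "measure M {w\<in>space M. \<bar>T w - expectation T\<bar> \<ge> en} \<le> variance T / en\<^sup>2"
        by (rule Chebyshev_inequality) (use T2int en0 in auto)
      also have "\<dots> \<le> C * (real n * (real n * v n)) / en\<^sup>2"
        by (intro divide_right_mono varT) simp
      also have "\<dots> = C * v n / \<epsilon>\<^sup>2" unfolding en_def using n1 e0
        by (simp add: field_simps power2_eq_square)
      finally show ?thesis .
    qed
    have mark: "measure M {w\<in>space M. D w \<ge> en} \<le> a n / \<epsilon>"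
    proof -
      have "measure M {w\<in>space M. D w \<ge> en} \<le> expectation D / en"
        by (rule integral_Markov_inequality_measure[where A="space M"])
           (use Dint en0 in \<open>auto simp: D_def intro!: sum_nonneg\<close>)
      also have "\<dots> = a n / \<epsilon>" unfolding ED en_def using n1 e0 by simp
      finally show ?thesis .
    qed
    have incl: "{w\<in>space M. \<bar>(\<Sum>i=1..n. X i w) - real n * integral\<^sup>L M (X 1)\<bar> > 3 * \<epsilon> * real n}
        \<subseteq> {w\<in>space M. D w \<ge> en} \<union> {w\<in>space M. \<bar>T w - expectation T\<bar> \<ge> en}"
    proof (rule subsetI)
      fix w assume w: "w \<in> {w\<in>space M. \<bar>(\<Sum>i=1..n. X i w) - real n * integral\<^sup>L M (X 1)\<bar> > 3 * \<epsilon> * real n}"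
      have "\<bar>S w - T w\<bar> \<le> D w"
      proof -
        have eq: "S w - T w = (\<Sum>i=1..n. (X i w - tr n (X i w)))" unfolding S_def T_def by (simp add: sum_subtractf)
        show ?thesis unfolding eq D_def by (rule sum_abs)
      qed
      moreover have "real n * a n < en" unfolding en_def using elim(2) n1 by simp
      moreover have "\<bar>S w - real n * \<mu>\<bar> > 3 * en" using w unfolding S_def \<mu>_def en_def by auto
      ultimately have "D w \<ge> en \<or> \<bar>T w - expectation T\<bar> \<ge> en" using bias by linarith
      thus "w \<in> {w\<in>space M. D w \<ge> en} \<union> {w\<in>space M. \<bar>T w - expectation T\<bar> \<ge> en}" using w by auto
    qed
    have "measure M {w\<in>space M. \<bar>(\<Sum>i=1..n. X i w) - real n * integral\<^sup>L M (X 1)\<bar> > 3 * \<epsilon> * real n}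
        \<le> measure M ({w\<in>space M. D w \<ge> en} \<union> {w\<in>space M. \<bar>T w - expectation T\<bar> \<ge> en})"
      by (rule finite_measure_mono[OF incl]) measurable
    also have "\<dots> \<le> measure M {w\<in>space M. D w \<ge> en} + measure M {w\<in>space M. \<bar>T w - expectation T\<bar> \<ge> en}"
      by (rule measure_Un_le) measurable
    also have "\<dots> \<le> a n / \<epsilon> + C * v n / \<epsilon>\<^sup>2" using cheb mark by simp
    finally show ?case using elim(1) by simp
  qed
qed



theorem proposition2p2:
  fixes M :: "'a measure" and X :: "nat \<Rightarrow> 'a \<Rightarrow> real"
    and L Lt :: "real \<Rightarrow> real" and p c :: real
  assumes "prob_space M"
    and "1 \<le> p" and "p < 2"
    and "\<And>i. X i \<in> borel_measurable M"
    and "\<And>i. i \<ge> 1 \<Longrightarrow> distr M borel (X i) = distr M borel (X 1)"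
    and "variance_condition M X"
    and "slowly_varying L"
    and "de_bruijn_conjugate L Lt"
    and "standing_assumptions L Lt"
    and "p = 1 \<Longrightarrow> (\<forall>x\<ge>0. L x \<ge> 1) \<and> mono_on {0..} L"
    and "\<And>\<epsilon>. \<epsilon> > 0 \<Longrightarrow>
           summable (\<lambda>n. measure M {\<omega>\<in>space M.
              (MAX j\<in>{1..n}. \<bar>\<Sum>i=1..j. (X i \<omega> - c)\<bar>)
                > \<epsilon> * real n powr (1/p) * Lt (real n powr (1/p))} / real n)"
  shows "integrable M (\<lambda>\<omega>. \<bar>X 1 \<omega>\<bar> powr p * \<bar>L \<bar>X 1 \<omega>\<bar>\<bar> powr p)
     \<and> integrable M (X 1) \<and> prob_space.expectation M (X 1) = c"
proof -
  note ps = assms(1)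
  interpret prob_space M by (rule ps)
  note meas[measurable] = assms(4)
  note idd = assms(5)
  note sv = assms(7) and db = assms(8) and sa = assms(9)
  have p0: "p > 0" using assms(2) by simp
  obtain C0 where C0: "\<forall>(k::nat) (l::nat) (f::nat \<Rightarrow> real \<Rightarrow> real).
        l \<ge> 1 \<longrightarrow> (\<forall>i. mono (f i)) \<longrightarrow>
        (\<forall>i\<in>{k+1..k+l}. integrable M (\<lambda>\<omega>. (f i (X i \<omega>))\<^sup>2)) \<longrightarrow>
        variance (\<lambda>\<omega>. \<Sum>i\<in>{k+1..k+l}. f i (X i \<omega>))
          \<le> C0 * (\<Sum>i\<in>{k+1..k+l}. variance (\<lambda>\<omega>. f i (X i \<omega>)))"
    using assms(6) unfolding variance_condition_def by blast
  define C where "C = max C0 1"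
  have C1: "C > 0" unfolding C_def by simp
  have V: "variance (\<lambda>w. \<Sum>i\<in>{1..n}. f i (X i w)) \<le> C * (\<Sum>i\<in>{1..n}. variance (\<lambda>w. f i (X i w)))"
    if n: "n \<ge> 1" and mf: "\<forall>i. mono (f i)"
      and int: "\<forall>i\<in>{1..n}. integrable M (\<lambda>w. (f i (X i w))\<^sup>2)" for n f
  proof -
    have "variance (\<lambda>w. \<Sum>i\<in>{0+1..0+n}. f i (X i w)) \<le> C0 * (\<Sum>i\<in>{0+1..0+n}. variance (\<lambda>w. f i (X i w)))"
      by (rule C0[rule_format, of n f 0]) (use n mf int in auto)
    hence "variance (\<lambda>w. \<Sum>i\<in>{1..n}. f i (X i w)) \<le> C0 * (\<Sum>i\<in>{1..n}. variance (\<lambda>w. f i (X i w)))"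
      by simp
    also have "\<dots> \<le> C * (\<Sum>i\<in>{1..n}. variance (\<lambda>w. f i (X i w)))"
      unfolding C_def by (intro mult_right_mono sum_nonneg variance_positive) auto
    finally show ?thesis .
  qed
  define b where "b = (\<lambda>n::nat. real n powr (1/p) * Lt (real n powr (1/p)))"
  have R: "(\<lambda>n. b n * \<bar>L (b n)\<bar> / real n powr (1/p)) \<longlonglongrightarrow> 1"
    and bpos: "eventually (\<lambda>n. b n > 0) sequentially"
    using b_ratio[OF db p0] unfolding b_def by auto
  have cont: "continuous_on {0..} L" using sa unfolding standing_assumptions_def by blast
  have binf: "filterlim b at_top sequentially" by (rule b_inf[OF cont p0 R bpos])
  obtain Kc Nc where Kc: "Kc > 0" "Nc \<ge> 1" "\<And>m n. Nc \<le> m \<Longrightarrow> m \<le> n \<Longrightarrow> b m \<le> Kc * b n"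
    using b_comp[OF sv sa p0 R binf] by blast
  define E where "E = (\<lambda>\<epsilon> n. {w\<in>space M. (MAX j\<in>{1..n}. \<bar>\<Sum>i=1..j. (X i w - c)\<bar>) > \<epsilon> * b n})"
  have hyp: "summable (\<lambda>n. measure M (E \<epsilon> n) / real n)" if "\<epsilon> > 0" for \<epsilon>
    using assms(11)[OF that] unfolding E_def b_def by (simp add: mult.assoc)
  have Emeas: "E \<epsilon> n \<in> sets M" for \<epsilon> n unfolding E_def by measurable
  have incl: "{w\<in>space M. \<exists>j\<in>{1..n}. X j w \<in> T} \<subseteq> E \<epsilon> n"
    if "b n \<ge> 0" "\<epsilon> > 0" "T \<subseteq> {x. \<bar>x - c\<bar> > 2 * (\<epsilon> * b n)}" for \<epsilon> n T
  proof
    fix w assume "w \<in> {w\<in>space M. \<exists>j\<in>{1..n}. X j w \<in> T}"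
    then obtain j where j: "w \<in> space M" "j \<in> {1..n}" "X j w \<in> T" by auto
    have big: "\<bar>X j w - c\<bar> > 2 * (\<epsilon> * b n)" using j(3) that(3) by auto
    have s0: "\<epsilon> * b n \<ge> 0" using that by simp
    have "(MAX k\<in>{1..n}. \<bar>\<Sum>i=1..k. (X i w - c)\<bar>) > \<epsilon> * b n"
      by (rule max_event[of "\<epsilon> * b n" j n X w c, OF s0 j(2) big])
    thus "w \<in> E \<epsilon> n" unfolding E_def using j(1) by auto
  qed
  define qp where "qp = (\<lambda>\<epsilon> n. measure M {w\<in>space M. X 1 w \<in> {c + 2*(\<epsilon>*b n)<..}})"
  define qm where "qm = (\<lambda>\<epsilon> n. measure M {w\<in>space M. X 1 w \<in> {..<c - 2*(\<epsilon>*b n)}})"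
  have gen: "summable (\<lambda>n. q \<epsilon> n / (C + real n * q \<epsilon> n))"
    if e0: "\<epsilon> > 0" and qdef: "q = (\<lambda>\<epsilon> n. measure M {w\<in>space M. X 1 w \<in> TT \<epsilon> n})"
      and TT: "\<And>\<epsilon> n. TT \<epsilon> n \<in> sets borel"
      and Tsg: "\<And>\<epsilon> n. mono (\<lambda>x::real. indicator (TT \<epsilon> n) x :: real) \<or> mono (\<lambda>x::real. - indicator (TT \<epsilon> n) x :: real)"
      and Tsub: "\<And>\<epsilon> n. \<epsilon> > 0 \<Longrightarrow> TT \<epsilon> n \<subseteq> {x. \<bar>x - c\<bar> > 2 * (\<epsilon> * b n)}"
    for q :: "real \<Rightarrow> nat \<Rightarrow> real" and TT \<epsilon>
  proof (rule summable_comparison_test_ev)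
    show "summable (\<lambda>n. measure M (E \<epsilon> n) / real n)" by (rule hyp[OF e0])
    have "eventually (\<lambda>n. n \<ge> (1::nat)) sequentially" by simp
    thus "eventually (\<lambda>n. norm (q \<epsilon> n / (C + real n * q \<epsilon> n)) \<le> measure M (E \<epsilon> n) / real n) sequentially"
      using bpos
    proof eventually_elim
      case (elim n)
      have q0: "q \<epsilon> n \<ge> 0" unfolding qdef by simp
      have dpos: "C + real n * q \<epsilon> n > 0" using C1 q0 by (simp add: add_pos_nonneg)
      have "real n * q \<epsilon> n / (C + real n * q \<epsilon> n) \<le> measure M {w\<in>space M. \<exists>j\<in>{1..n}. X j w \<in> TT \<epsilon> n}"
        unfolding qdef
        by (rule PZ[OF ps meas idd C1 V[OF elim(1)] TT Tsg])
      also have "\<dots> \<le> measure M (E \<epsilon> n)"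
        by (rule finite_measure_mono[OF incl Emeas]) (use elim e0 Tsub in auto)
      finally have "real n * q \<epsilon> n / (C + real n * q \<epsilon> n) \<le> measure M (E \<epsilon> n)" .
      moreover have n1: "real n \<ge> 1" using elim by simp
      ultimately have "q \<epsilon> n / (C + real n * q \<epsilon> n) \<le> measure M (E \<epsilon> n) / real n"
        using dpos by (simp add: field_simps)
      thus ?case using q0 dpos by simp
    qed
  qed
  have mono_p: "mono (\<lambda>x::real. indicator {a<..} x :: real)" for a
    unfolding mono_def indicator_def by auto
  have mono_m: "mono (\<lambda>x::real. - indicator {..<a} x :: real)" for a
    unfolding mono_def indicator_def by auto
  have Sp: "summable (\<lambda>n. qp \<epsilon> n / (C + real n * qp \<epsilon> n))" if "\<epsilon> > 0" for \<epsilon>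
    by (rule gen[OF that qp_def]) (use mono_p in auto)
  have Sm: "summable (\<lambda>n. qm \<epsilon> n / (C + real n * qm \<epsilon> n))" if "\<epsilon> > 0" for \<epsilon>
    by (rule gen[OF that qm_def]) (use mono_m in auto)
  have scal: "(e / Kc) * b m \<le> e * b n" if "e > 0" "Nc \<le> m" "m \<le> n" for e m n
  proof -
    have "(e / Kc) * b m \<le> (e / Kc) * (Kc * b n)"
      using Kc(3)[OF that(2,3)] that(1) Kc(1) by (intro mult_left_mono) auto
    thus ?thesis using Kc(1) by simp
  qed
  have sump: "summable (qp e)" if "e > 0" for e
  proof (rule tail_lemma[OF C1 Kc(1) _ Sp _ that])
    show "qp e n \<ge> 0" for e n unfolding qp_def by simp
    show "qp e n \<le> qp (e / Kc) m" if "e > 0" "Nc \<le> m" "m \<le> n" for e m n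
      unfolding qp_def by (rule finite_measure_mono) (use scal[OF that] in auto)
  qed
  have summ: "summable (qm e)" if "e > 0" for e
  proof (rule tail_lemma[OF C1 Kc(1) _ Sm _ that])
    show "qm e n \<ge> 0" for e n unfolding qm_def by simp
    show "qm e n \<le> qm (e / Kc) m" if "e > 0" "Nc \<le> m" "m \<le> n" for e m n
      unfolding qm_def by (rule finite_measure_mono) (use scal[OF that] in auto)
  qed
  have contA: "continuous_on UNIV (\<lambda>x. L \<bar>x\<bar>)"
    by (rule continuous_on_compose2[OF cont continuous_on_rabs]) auto
  have Lm[measurable]: "(\<lambda>x. L \<bar>x\<bar>) \<in> borel_measurable borel"
    by (rule borel_measurable_continuous_onI[OF contA])
  define W where "W = (\<lambda>w. (\<bar>X 1 w\<bar> * \<bar>L \<bar>X 1 w\<bar>\<bar>) powr p)"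
  have Wm[measurable]: "W \<in> borel_measurable M" unfolding W_def by measurable
  have W0: "W w \<ge> 0" for w unfolding W_def by simp
  obtain KW NW where KW: "KW > 0" "\<And>n x. n \<ge> NW \<Longrightarrow> \<bar>x - c\<bar> \<le> b n \<Longrightarrow> (\<bar>x\<bar> * \<bar>L \<bar>x\<bar>\<bar>) powr p \<le> KW * real n"
    using W_bound[OF sv sa p0 cont R binf, of c] by blast
  have Wtail: "summable (\<lambda>n. measure M {w\<in>space M. W w > KW * real n})"
  proof (rule summable_comparison_test_ev)
    show "summable (\<lambda>n. qp (1/2) n + qm (1/2) n)" by (intro summable_add sump summ) auto
    show "eventually (\<lambda>n. norm (measure M {w\<in>space M. W w > KW * real n}) \<le> qp (1/2) n + qm (1/2) n) sequentially"
      unfolding eventually_sequentially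
    proof (intro exI[of _ NW] allI impI)
      fix n assume n: "n \<ge> NW"
      have "{w\<in>space M. W w > KW * real n} \<subseteq> {w\<in>space M. X 1 w \<in> {c + 2*(1/2*b n)<..}} \<union> {w\<in>space M. X 1 w \<in> {..<c - 2*(1/2*b n)}}"
      proof
        fix w assume w: "w \<in> {w\<in>space M. W w > KW * real n}"
        hence "\<not> \<bar>X 1 w - c\<bar> \<le> b n" using KW(2)[OF n, of "X 1 w"] unfolding W_def by auto
        thus "w \<in> {w\<in>space M. X 1 w \<in> {c + 2*(1/2*b n)<..}} \<union> {w\<in>space M. X 1 w \<in> {..<c - 2*(1/2*b n)}}"
          using w by auto
      qed
      hence "measure M {w\<in>space M. W w > KW * real n} \<le> measure M ({w\<in>space M. X 1 w \<in> {c + 2*(1/2*b n)<..}} \<union> {w\<in>space M. X 1 w \<in> {..<c - 2*(1/2*b n)}})"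
        by (rule finite_measure_mono) measurable
      also have "\<dots> \<le> qp (1/2) n + qm (1/2) n"
        unfolding qp_def qm_def by (rule measure_Un_le) measurable
      finally show "norm (measure M {w\<in>space M. W w > KW * real n}) \<le> qp (1/2) n + qm (1/2) n" by simp
    qed
  qed
  have intW: "integrable M W" by (rule integrable_from_tails[OF ps Wm W0 KW(1) Wtail])
  have goal1: "integrable M (\<lambda>\<omega>. \<bar>X 1 \<omega>\<bar> powr p * \<bar>L \<bar>X 1 \<omega>\<bar>\<bar> powr p)"
  proof -
    have "(\<lambda>\<omega>. \<bar>X 1 \<omega>\<bar> powr p * \<bar>L \<bar>X 1 \<omega>\<bar>\<bar> powr p) = W"
      unfolding W_def by (intro ext) (simp add: powr_mult)
    thus ?thesis using intW by simp
  qed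
  obtain c0 A where hl: "c0 > 0" "A > 0" "\<And>y. y \<ge> A \<Longrightarrow> L y > 0 \<and> c0 * y powr (1/p) \<le> y * L y"
    using h_lower[OF sv sa assms(2) assms(10)] by blast
  have Xb: "\<bar>X 1 w\<bar> \<le> A + W w / c0 powr p" for w
  proof (cases "\<bar>X 1 w\<bar> \<ge> A")
    case True
    define x where "x = \<bar>X 1 w\<bar>"
    have x: "x \<ge> A" "L x > 0" "c0 * x powr (1/p) \<le> x * L x" using hl(3)[OF True] True unfolding x_def by auto
    have "(c0 * x powr (1/p)) powr p \<le> (x * L x) powr p"
      using x hl(1) p0 by (intro powr_mono2) auto
    moreover have "(c0 * x powr (1/p)) powr p = c0 powr p * x"
      using hl(1) hl(2) x(1) p0 by (simp add: powr_mult powr_powr)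
    moreover have "(x * L x) powr p = W w" unfolding W_def x_def[symmetric] using x(2) by simp
    ultimately have "c0 powr p * x \<le> W w" by simp
    hence "x \<le> W w / c0 powr p" using hl(1) by (simp add: field_simps)
    thus ?thesis unfolding x_def using hl(2) by simp
  next
    case False
    thus ?thesis using W0[of w] hl(1) by (smt (verit) divide_nonneg_pos powr_gt_zero)
  qed
  have goal2: "integrable M (X 1)"
  proof (rule Bochner_Integration.integrable_bound[where f="\<lambda>w. A + W w / c0 powr p"])
    show "integrable M (\<lambda>w. A + W w / c0 powr p)" using intW by simp
    show "AE w in M. norm (X 1 w) \<le> norm (A + W w / c0 powr p)"
      using Xb W0 hl by (intro AE_I2) (smt (verit) divide_nonneg_pos powr_gt_zero real_norm_def)
  qed measurable
  obtain Kb Nb where Kb: "Kb > 0" "\<And>n. n \<ge> Nb \<Longrightarrow> b n \<le> Kb * real n"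
    using b_lin[OF hl(1) hl(3) p0 hl(2) R binf] by blast
  define \<mu> where "\<mu> = expectation (X 1)"
  have half: "(1/2::real) > 0" by simp
  have close: "\<bar>\<mu> - c\<bar> \<le> 6 * \<epsilon>" if e0: "\<epsilon> > 0" for \<epsilon>
  proof -
    have "eventually (\<lambda>n. measure M {w\<in>space M. \<bar>(\<Sum>i=1..n. X i w) - real n * integral\<^sup>L M (X 1)\<bar>
            > 3 * \<epsilon> * real n} < 1/2) sequentially"
      using wlln[OF ps meas idd C1 V goal2 e0 half] .
    then obtain N1 where N1: "\<And>n. n \<ge> N1 \<Longrightarrow> measure M {w\<in>space M. \<bar>(\<Sum>i=1..n. X i w) - real n * integral\<^sup>L M (X 1)\<bar>
            > 3 * \<epsilon> * real n} < 1/2"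
      unfolding eventually_sequentially by blast
    have e3: "3 * \<epsilon> / Kb > 0" using e0 Kb(1) by simp
    obtain n where n: "n \<ge> max N1 (max Nb 1)" "measure M (E (3 * \<epsilon> / Kb) n) < 1/2"
      using io_small[OF hyp[OF e3], of "1/2" "max N1 (max Nb 1)"] by auto
    define A1 where "A1 = {w\<in>space M. \<bar>(\<Sum>i=1..n. X i w) - real n * integral\<^sup>L M (X 1)\<bar> > 3 * \<epsilon> * real n}"
    have A1m: "A1 \<in> sets M" unfolding A1_def by measurable
    have "measure M (A1 \<union> E (3 * \<epsilon> / Kb) n) \<le> measure M A1 + measure M (E (3 * \<epsilon> / Kb) n)"
      by (rule measure_Un_le[OF A1m Emeas])
    also have "\<dots> < 1" using N1[of n] n unfolding A1_def by auto
    finally have lt: "measure M (A1 \<union> E (3 * \<epsilon> / Kb) n) < 1" .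
    have "\<exists>w\<in>space M. w \<notin> A1 \<union> E (3 * \<epsilon> / Kb) n"
    proof (rule ccontr)
      assume "\<not> ?thesis"
      hence "space M \<subseteq> A1 \<union> E (3 * \<epsilon> / Kb) n" by auto
      hence "measure M (space M) \<le> measure M (A1 \<union> E (3 * \<epsilon> / Kb) n)"
        by (intro finite_measure_mono) (use A1m Emeas in auto)
      thus False using lt prob_space by simp
    qed
    then obtain w where w: "w \<in> space M" "w \<notin> A1" "w \<notin> E (3 * \<epsilon> / Kb) n" by auto
    have n1: "n \<ge> 1" "n \<ge> Nb" using n(1) by auto
    have a1: "\<bar>(\<Sum>i=1..n. X i w) - real n * \<mu>\<bar> \<le> 3 * \<epsilon> * real n"
      using w(1,2) unfolding A1_def \<mu>_def by auto
    have "(MAX j\<in>{1..n}. \<bar>\<Sum>i=1..j. (X i w - c)\<bar>) \<le> 3 * \<epsilon> / Kb * b n"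
      using w(1,3) unfolding E_def by auto
    also have "\<dots> \<le> 3 * \<epsilon> / Kb * (Kb * real n)"
      using Kb(2)[OF n1(2)] e3 by (intro mult_left_mono) auto
    also have "\<dots> = 3 * \<epsilon> * real n" using Kb(1) by simp
    finally have a2: "\<bar>(\<Sum>i=1..n. X i w) - real n * c\<bar> \<le> 3 * \<epsilon> * real n"
      using max_ge_sum[OF n1(1), of X w c] by linarith
    have "real n * \<mu> - real n * c = real n * (\<mu> - c)" by (simp add: algebra_simps)
    hence "real n * \<bar>\<mu> - c\<bar> = \<bar>real n * \<mu> - real n * c\<bar>" by (simp add: abs_mult)
    also have "\<dots> \<le> 6 * \<epsilon> * real n" using a1 a2 by linarith
    finally have "real n * \<bar>\<mu> - c\<bar> \<le> real n * (6 * \<epsilon>)" by (simp add: algebra_simps)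
    thus ?thesis using n1(1) by simp
  qed
  have goal3: "\<mu> = c"
  proof (rule ccontr)
    assume ne: "\<mu> \<noteq> c"
    hence "\<bar>\<mu> - c\<bar> > 0" by simp
    hence "\<bar>\<mu> - c\<bar> \<le> 6 * (\<bar>\<mu> - c\<bar> / 12)" using close[of "\<bar>\<mu> - c\<bar> / 12"] by simp
    thus False using \<open>\<bar>\<mu> - c\<bar> > 0\<close> by simp
  qed
  show ?thesis using goal1 goal2 goal3 unfolding \<mu>_def by simp
qed


end
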